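(* Let $X$, $Y$ be normed vector spaces, let $f\colon X\to Y$ be continuously open at $x^*\in X$, and let $K$ be a compact neighborhood of $x^*$. Then $$\sup_{x\in K}\|f(x)\|\ \ge\ \|f(x^* )\|+\Gamma_{f(x^* )}\Big(f\big(\mathbb{B}_{\Gamma_{x^*}(K)}(x^* )\big)\Big).$$
   Context: $\mathbb{B}_r(x)$ denotes the open ball of radius $r$ centered at $x$. For metric spaces $X,Y$ and $x\in X$, $f$ is continuously open at $x$ if there is a continuous, positive definite (i.e. $g(0)=0$, $g(r)>0$ for $r>0$), monotonically increasing function $g$ with $\mathbb{B}_{g(r)}(f(x))\subseteq f(\mathbb{B}_r(x))$ for all sufficiently small $r>0$. For a normed space $Z$, $z^*\in Z$ and $K\subseteq Z$, the inradius of $K$ at $z^*$ is $\Gamma_{z^*}(K)=\sup\{r\ge0:\mathbb{B}_r(z^* )\subseteq K\}$. *)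

theory Defs
  imports "HOL-Analysis.Analysis"
begin

definition continuously_open_at :: "('a::metric_space \<Rightarrow> 'b::metric_space) \<Rightarrow> 'a \<Rightarrow> bool" where
  "continuously_open_at f x \<longleftrightarrow>
     (\<exists>g :: real \<Rightarrow> real.
        continuous_on {0..} g \<and> g 0 = 0 \<and> (\<forall>r>0. g r > 0) \<and> mono_on {0..} g \<and>
        (\<exists>\<delta>>0. \<forall>r. 0 < r \<and> r < \<delta> \<longrightarrow> ball (f x) (g r) \<subseteq> f ` ball x r))"

definition eball :: "'a::metric_space \<Rightarrow> ereal \<Rightarrow> 'a set" where
  "eball z e = {y. ereal (dist z y) < e}"

definition inradius :: "'a::metric_space \<Rightarrow> 'a set \<Rightarrow> ereal" where
  "inradius z K = Sup {ereal r | r. r \<ge> 0 \<and> ball z r \<subseteq> K}"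

end

theory Submission
  imports Defs
begin

lemma unit_dir:
  fixes z :: "'b::real_normed_vector"
  assumes "\<exists>y::'b. y \<noteq> 0"
  shows "\<exists>u. norm u = 1 \<and> (\<forall>t\<ge>0. norm (z + t *\<^sub>R u) = norm z + t)"
proof (cases "z = 0")
  case True
  from assms obtain y :: 'b where y: "y \<noteq> 0" by blast
  show ?thesis
    by (rule exI[of _ "y /\<^sub>R norm y"]) (use y True in auto)
next
  case False
  have "norm (z + t *\<^sub>R (z /\<^sub>R norm z)) = norm z + t" if "t \<ge> 0" for t
  proof -
    have "z + t *\<^sub>R (z /\<^sub>R norm z) = (1 + t / norm z) *\<^sub>R z"
      by (simp add: algebra_simps divide_inverse_commute)
    moreover have "norm ((1 + t / norm z) *\<^sub>R z) = (1 + t / norm z) * norm z"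
      using that by simp
    ultimately show ?thesis using False by (simp add: field_simps)
  qed
  then show ?thesis using False by (intro exI[of _ "z /\<^sub>R norm z"]) auto
qed

theorem corollary1:
  fixes f :: "'a::real_normed_vector \<Rightarrow> 'b::real_normed_vector"
    and xs :: 'a and K :: "'a set"
  assumes nontriv: "\<exists>y::'b. y \<noteq> 0"
    and copen: "continuously_open_at f xs"
    and compK: "compact K" and nbhd: "xs \<in> interior K"
  shows "(SUP x\<in>K. ereal (norm (f x))) \<ge>
           ereal (norm (f xs)) + inradius (f xs) (f ` eball xs (inradius xs K))"
proof -
  define M where "M = (SUP x\<in>K. ereal (norm (f x)))"
  define n where "n = norm (f xs)"
  have xsK: "xs \<in> K" using nbhd interior_subset by blast
  have fK: "y \<in> f ` K \<Longrightarrow> ereal (norm y) \<le> M" for y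
    unfolding M_def by (auto intro: SUP_upper)
  have nM: "ereal n \<le> M" using fK xsK n_def by blast
  have eK: "eball xs (inradius xs K) \<subseteq> K"
  proof
    fix y assume "y \<in> eball xs (inradius xs K)"
    then have "ereal (dist xs y) < Sup {ereal r | r. r \<ge> 0 \<and> ball xs r \<subseteq> K}"
      unfolding eball_def inradius_def by simp
    then obtain e where "e \<in> {ereal r | r. r \<ge> 0 \<and> ball xs r \<subseteq> K}" "ereal (dist xs y) < e"
      using less_Sup_iff by blast
    then obtain r where "ball xs r \<subseteq> K" "dist xs y < r" by auto
    then show "y \<in> K" by auto
  qed
  obtain u :: 'b where u: "norm u = 1" "\<And>t. t \<ge> 0 \<Longrightarrow> norm (f xs + t *\<^sub>R u) = n + t"
    using unit_dir[OF nontriv, of "f xs"] n_def by blast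
  have key: "ereal r + ereal n \<le> M" if r: "r \<ge> 0" "ball (f xs) r \<subseteq> f ` eball xs (inradius xs K)" for r
  proof -
    have "ereal (n + r) \<le> M"
    proof (rule dense_le)
      fix y assume y: "y < ereal (n + r)"
      show "y \<le> M"
      proof (cases "y \<le> ereal n")
        case True then show ?thesis using nM by (rule order_trans)
      next
        case False
        then obtain s where s: "y = ereal s" "n < s" "s < n + r" using y
          by (cases y) auto
        have "f xs + (s - n) *\<^sub>R u \<in> ball (f xs) r"
          using s u(1) by (simp add: dist_norm)
        then have "f xs + (s - n) *\<^sub>R u \<in> f ` K" using r eK by blast
        from fK[OF this] show ?thesis using u(2)[of "s - n"] s by simp
      qed
    qed
    then show ?thesis by (simp add: add.commute)
  qed
  let ?A = "{ereal r | r. r \<ge> 0 \<and> ball (f xs) r \<subseteq> f ` eball xs (inradius xs K)}"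
  have ne: "?A \<noteq> {}" by force
  have "Sup ?A + ereal n = (SUP a\<in>?A. a + ereal n)"
    using SUP_ereal_add_left[OF ne, of "ereal n" "\<lambda>a. a"] by simp
  also have "\<dots> \<le> M" using key by (auto intro!: SUP_least)
  finally show ?thesis unfolding M_def n_def inradius_def by (simp add: add.commute)
qed

end
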